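(* Let $p\ge 2$ be an integer and $\eta>0$. Then the function $\tau_\ell^-$ is strictly decreasing on $[0,1]$.
   Context: For an integer $p\ge 2$ and a real parameter $\eta>-1$, define for $\tau\ge 0$ and $s\in[-1,1]$ $$\ell_-(\tau,s)=\cos\tau\,\sin\!\Big(\tau\eta s-\tfrac{\pi}{p}\Big)+s\sin\tau\,\cos\!\Big(\tau\eta s-\tfrac{\pi}{p}\Big),$$ and let $\tau_\ell^-(s)$ be the smallest positive root in $\tau$ of $\ell_-(\tau,s)=0$. *)

theory Defs
  imports Complex_Main
begin

definition ell_minus :: "nat \<Rightarrow> real \<Rightarrow> real \<Rightarrow> real \<Rightarrow> real" where
  "ell_minus p \<eta> \<tau> s =
     cos \<tau> * sin (\<tau> * \<eta> * s - pi / real p) + s * sin \<tau> * cos (\<tau> * \<eta> * s - pi / real p)"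

definition tau_ell_minus :: "nat \<Rightarrow> real \<Rightarrow> real \<Rightarrow> real" where
  "tau_ell_minus p \<eta> s = (LEAST \<tau>. \<tau> > 0 \<and> ell_minus p \<eta> \<tau> s = 0)"

end

theory Submission
  imports Defs "HOL-Analysis.Analysis"
begin

lemma pi_p_le: "p \<ge> 2 \<Longrightarrow> pi / real p \<le> pi / 2"
  by (rule divide_left_mono) auto

lemma ell_cont: "continuous_on A (\<lambda>t. ell_minus p \<eta> t s)"
  unfolding ell_minus_def by (intro continuous_intros)

lemma ell_zero:
  assumes "p \<ge> 2"
  shows "ell_minus p \<eta> 0 s < 0"
proof -
  have a1: "0 < pi / real p" using assms by simp
  have a2: "pi / real p \<le> pi / 2" by (rule pi_p_le[OF assms(1)])
  have "sin (pi / real p) > 0" using a1 a2 by (intro sin_gt_zero) (simp, linarith)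
  then show ?thesis unfolding ell_minus_def by simp
qed

lemma root_below:
  assumes "p \<ge> 2" "0 < t" "ell_minus p \<eta> t s > 0"
  shows "\<exists>y. 0 < y \<and> y < t \<and> ell_minus p \<eta> y s = 0"
proof -
  have z: "ell_minus p \<eta> 0 s < 0" using ell_zero assms(1) .
  obtain y where y: "0 \<le> y" "y \<le> t" "ell_minus p \<eta> y s = 0"
    using IVT'[of "\<lambda>t. ell_minus p \<eta> t s" 0 0 t] z assms ell_cont by force
  have "y \<noteq> 0" using y z by auto
  moreover have "y \<noteq> t" using y assms by auto
  ultimately show ?thesis using y by (intro exI[of _ y]) auto
qed

lemma phi_pos:
  assumes "p \<ge> 2" "\<eta> > 0" "0 < s" "s \<le> 1" "pi / real p / (\<eta> * s) \<le> pi / 2"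
  shows "ell_minus p \<eta> (pi / real p / (\<eta> * s)) s > 0"
proof -
  let ?t = "pi / real p / (\<eta> * s)"
  have "?t * \<eta> * s = pi / real p" using assms by (simp add: field_simps)
  moreover have "?t > 0" using assms by simp
  moreover have "sin ?t > 0" using assms(5) \<open>?t > 0\<close> by (intro sin_gt_zero) (simp, linarith)
  ultimately show ?thesis unfolding ell_minus_def using assms by simp
qed

lemma root_exists:
  assumes "p \<ge> 2" "\<eta> > 0" "0 \<le> s" "s \<le> 1"
  shows "\<exists>y. 0 < y \<and> y \<le> pi / 2 \<and> ell_minus p \<eta> y s = 0"
proof (cases "s = 0")
  case True
  then show ?thesis by (intro exI[of _ "pi/2"]) (simp add: ell_minus_def)
next
  case False
  hence s: "s > 0" using assms by simp
  have a1: "0 < pi / real p" using assms by simp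
  have a2: "pi / real p \<le> pi / 2" by (rule pi_p_le[OF assms(1)])
  show ?thesis
  proof (cases "pi / real p / (\<eta> * s) \<le> pi / 2")
    case True
    have "pi / real p / (\<eta> * s) > 0" using assms s by simp
    then obtain y where yy: "0 < y" "y < pi / real p / (\<eta> * s)" "ell_minus p \<eta> y s = 0"
      using root_below[OF assms(1)] phi_pos[OF assms(1,2) s assms(4) True] by blast
    have "y \<le> pi/2" using yy(2) True by linarith
    then show ?thesis using yy by (intro exI[of _ y]) auto
  next
    case False
    have "pi / 2 * \<eta> * s < pi / real p"
      using False s assms by (simp add: field_simps)
    moreover have "pi / 2 * \<eta> * s > 0" using s assms by simp
    ultimately have c: "cos (pi / 2 * \<eta> * s - pi / real p) > 0"
      using a2 by (intro cos_gt_zero_pi) linarith+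
    have "ell_minus p \<eta> (pi/2) s > 0" unfolding ell_minus_def using c s by simp
    then obtain y where "0 < y" "y < pi/2" "ell_minus p \<eta> y s = 0"
      using root_below[OF assms(1)] by (meson pi_half_gt_zero)
    then show ?thesis by (intro exI[of _ y]) auto
  qed
qed

lemma least_root:
  assumes "p \<ge> 2" "\<eta> > 0" "0 \<le> s" "s \<le> 1"
  shows "0 < tau_ell_minus p \<eta> s \<and> tau_ell_minus p \<eta> s \<le> pi / 2
    \<and> ell_minus p \<eta> (tau_ell_minus p \<eta> s) s = 0
    \<and> (\<forall>y. 0 < y \<and> ell_minus p \<eta> y s = 0 \<longrightarrow> tau_ell_minus p \<eta> s \<le> y)"
proof -
  define S where "S = (\<lambda>t. ell_minus p \<eta> t s) -` {0} \<inter> {0..pi/2}"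
  have cl: "closed S" unfolding S_def
    by (rule closed_vimage_Int) (auto intro: ell_cont)
  obtain y0 where y0: "0 < y0" "y0 \<le> pi / 2" "ell_minus p \<eta> y0 s = 0"
    using root_exists[OF assms] by blast
  have ne: "S \<noteq> {}" using y0 unfolding S_def by auto
  have bb: "bdd_below S" unfolding S_def by (rule bdd_belowI[of _ 0]) auto
  define r where "r = Inf S"
  have rS: "r \<in> S" unfolding r_def using closed_contains_Inf[OF ne bb cl] .
  have r0: "r \<noteq> 0" using rS ell_zero[OF assms(1), of \<eta> s] unfolding S_def by auto
  have rP: "0 < r" "r \<le> pi/2" "ell_minus p \<eta> r s = 0" using rS r0 unfolding S_def by auto
  have rmin: "\<forall>y. 0 < y \<and> ell_minus p \<eta> y s = 0 \<longrightarrow> r \<le> y"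
  proof (intro allI impI)
    fix y assume y: "0 < y \<and> ell_minus p \<eta> y s = 0"
    show "r \<le> y"
    proof (cases "y \<le> pi/2")
      case True
      hence "y \<in> S" using y unfolding S_def by auto
      then show ?thesis unfolding r_def using bb by (simp add: cInf_lower)
    next
      case False then show ?thesis using rP by simp
    qed
  qed
  have "tau_ell_minus p \<eta> s = r"
    unfolding tau_ell_minus_def
    by (rule Least_equality) (use rP rmin in auto)
  then show ?thesis using rP rmin by simp
qed

theorem mainTheorem6:
  fixes p :: nat and \<eta> :: real
  assumes "p \<ge> 2" and "\<eta> > 0"
  shows "\<forall>s1 s2. 0 \<le> s1 \<longrightarrow> s1 < s2 \<longrightarrow> s2 \<le> 1 \<longrightarrow>
           tau_ell_minus p \<eta> s2 < tau_ell_minus p \<eta> s1"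
proof (intro allI impI)
  fix s1 s2 :: real
  assume h: "0 \<le> s1" "s1 < s2" "s2 \<le> 1"
  define r where "r = tau_ell_minus p \<eta> s1"
  have L1: "0 < r" "r \<le> pi/2" "ell_minus p \<eta> r s1 = 0"
    using least_root[OF assms, of s1] h unfolding r_def by auto
  have L2: "\<forall>y. 0 < y \<and> ell_minus p \<eta> y s2 = 0 \<longrightarrow> tau_ell_minus p \<eta> s2 \<le> y"
    using least_root[OF assms, of s2] h by auto
  have s2: "s2 > 0" using h by simp
  have a1: "0 < pi / real p" using assms by simp
  have a2: "pi / real p \<le> pi / 2" by (rule pi_p_le[OF assms(1)])
  have "\<exists>y. 0 < y \<and> y < r \<and> ell_minus p \<eta> y s2 = 0"
  proof (cases "pi / real p / (\<eta> * s2) < r")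
    case True
    have "pi / real p / (\<eta> * s2) > 0" using assms s2 by simp
    then obtain y where "0 < y" "y < pi / real p / (\<eta> * s2)" "ell_minus p \<eta> y s2 = 0"
      using root_below[OF assms(1)] phi_pos[OF assms s2 h(3)] True L1 by fastforce
    then show ?thesis using True by (intro exI[of _ y]) auto
  next
    case False
    define f1 where "f1 = r * \<eta> * s1 - pi / real p"
    define f2 where "f2 = r * \<eta> * s2 - pi / real p"
    have f2le: "f2 \<le> 0" using False s2 assms unfolding f2_def by (simp add: field_simps)
    have f12: "f1 < f2" unfolding f1_def f2_def using h L1 assms by simp
    have "r * \<eta> \<ge> 0" using L1 assms by simp
    hence "r * \<eta> * s1 \<ge> 0" using h(1) by (rule mult_nonneg_nonneg)
    hence f1ge: "f1 \<ge> - (pi/2)" unfolding f1_def using a2 by linarith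
    have "ell_minus p \<eta> r s2 > 0"
    proof (cases "r = pi/2")
      case True
      have "cos f2 > 0" using f12 f1ge f2le by (intro cos_gt_zero_pi) auto
      moreover have "cos r = 0" "sin r = 1" unfolding True by simp_all
      ultimately show ?thesis unfolding ell_minus_def f2_def[symmetric] using s2 by simp
    next
      case False
      hence rl: "r < pi/2" using L1 by simp
      have cr: "cos r > 0" using rl L1 by (intro cos_gt_zero_pi) auto
      have sr: "sin r > 0" using rl L1 by (intro sin_gt_zero) auto
      have ss: "sin f1 < sin f2" using f12 f1ge f2le by (intro sin_monotone_2pi) auto
      have cc: "cos f1 \<le> cos f2" using f12 f1ge f2le
        by (intro cos_monotone_minus_pi_0') auto
      have c1: "cos f1 \<ge> 0" using f1ge f12 f2le by (intro cos_ge_zero) auto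
      have e1: "cos r * sin f1 + s1 * sin r * cos f1 = 0"
        using L1(3) unfolding ell_minus_def f1_def by simp
      have "cos r * sin f1 < cos r * sin f2" using cr ss by simp
      moreover have "s1 * sin r * cos f1 \<le> s2 * sin r * cos f2"
        using h sr c1 cc by (intro mult_mono) auto
      ultimately show ?thesis unfolding ell_minus_def f2_def[symmetric] using e1 by linarith
    qed
    then show ?thesis using root_below[OF assms(1) L1(1)] by blast
  qed
  then obtain y where y: "0 < y" "y < r" "ell_minus p \<eta> y s2 = 0" by blast
  show "tau_ell_minus p \<eta> s2 < tau_ell_minus p \<eta> s1"
    using L2 y unfolding r_def[symmetric] by force
qed

end
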